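(* Let $t\geq 4$ be an even integer and let $a,b,c$ be positive integers with $a\geq 2$ and $a+b=t-1$. Then the multiset $\{1^a,2^b,t^c\}$ admits a linear realization.
   Context: $\{1^a,2^b,t^{c}\}$ is the multiset with $a$ copies of $1$, $b$ copies of $2$ and $c$ copies of $t$. For a multiset $L$ of positive integers with $|L|=v-1$, each at most $v-1$, a linear realization of $L$ is a Hamiltonian path $[x_0,\dots,x_{v-1}]$ of the complete graph on $\{0,\dots,v-1\}$ such that the multiset $\{|x_i-x_{i+1}| : i=0,\dots,v-2\}$ equals $L$. *)

theory Defs
  imports Main "HOL-Library.Multiset"
begin

definition absdiff :: "nat \<Rightarrow> nat \<Rightarrow> nat" where
  "absdiff x y = (if x \<le> y then y - x else x - y)"

text \<open>A linear realization of a multiset L of positive integers with |L| = v - 1: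
  a Hamiltonian path [x_0,...,x_{v-1}] of the complete graph on {0,...,v-1}
  (i.e. an ordering of all vertices) whose multiset of edge lengths equals L.\<close>
definition linear_realization :: "nat multiset \<Rightarrow> nat list \<Rightarrow> bool" where
  "linear_realization L xs \<longleftrightarrow>
     length xs = size L + 1 \<and> distinct xs \<and> set xs = {0..<length xs} \<and>
     mset (map (\<lambda>i. absdiff (xs ! i) (xs ! Suc i)) [0..<length xs - 1]) = L"

definition admits_linear_realization :: "nat multiset \<Rightarrow> bool" where
  "admits_linear_realization L \<longleftrightarrow> (\<exists>xs. linear_realization L xs)"

end

theory Submission
  imports Defs
begin

fun adjd :: "nat list \<Rightarrow> nat multiset" where
  "adjd (x # y # zs) = add_mset (absdiff x y) (adjd (y # zs))"
| "adjd _ = {#}"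

lemma absdiff_sym: "absdiff x y = absdiff y x" by (simp add: absdiff_def)

lemma adjd_Cons: "xs \<noteq> [] \<Longrightarrow> adjd (x # xs) = add_mset (absdiff x (hd xs)) (adjd xs)"
  by (cases xs) auto

lemma adjd_append: "xs \<noteq> [] \<Longrightarrow> ys \<noteq> [] \<Longrightarrow>
   adjd (xs @ ys) = add_mset (absdiff (last xs) (hd ys)) (adjd xs + adjd ys)"
proof (induction xs)
  case Nil then show ?case by simp
next
  case (Cons x xs)
  show ?case
  proof (cases "xs = []")
    case True then show ?thesis using Cons.prems by (simp add: adjd_Cons)
  next
    case False
    then have "adjd ((x # xs) @ ys) = add_mset (absdiff x (hd xs)) (adjd (xs @ ys))"
      by (simp add: adjd_Cons)
    also have "\<dots> = add_mset (absdiff x (hd xs)) (add_mset (absdiff (last xs) (hd ys)) (adjd xs + adjd ys))"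
      using Cons False by simp
    finally show ?thesis using False by (simp add: adjd_Cons)
  qed
qed

lemma adjd_rev: "adjd (rev xs) = adjd xs"
proof (induction xs)
  case Nil then show ?case by simp
next
  case (Cons x xs)
  show ?case
  proof (cases "xs = []")
    case True then show ?thesis by simp
  next
    case False
    then show ?thesis using Cons
      by (simp add: adjd_append adjd_Cons last_rev absdiff_sym)
  qed
qed

lemma adjd_map: "(\<And>x y. x \<in> set xs \<Longrightarrow> y \<in> set xs \<Longrightarrow> absdiff (f x) (f y) = absdiff x y)
  \<Longrightarrow> adjd (map f xs) = adjd xs"
  by (induction xs rule: adjd.induct) auto

lemma size_adjd: "size (adjd xs) = length xs - 1"
  by (induction xs rule: adjd.induct) auto

lemma mset_map_upt_Suc: "mset (map g [0..<Suc m]) = add_mset (g 0) (mset (map (\<lambda>i. g (Suc i)) [0..<m]))"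
proof -
  have "[0..<Suc m] = 0 # map Suc [0..<m]" by (simp add: map_Suc_upt upt_conv_Cons)
  then show ?thesis by (simp del: upt_Suc add: comp_def)
qed

lemma adjd_mset: "adjd xs = mset (map (\<lambda>i. absdiff (xs ! i) (xs ! Suc i)) [0..<length xs - 1])"
proof (induction xs rule: adjd.induct)
  case (1 x y zs)
  have "length (x # y # zs) - 1 = Suc (length (y # zs) - 1)" by simp
  then show ?case using 1 by (simp only: mset_map_upt_Suc) simp
qed auto

definition len :: "nat \<Rightarrow> nat \<Rightarrow> nat \<Rightarrow> nat" where
  "len t c r = (if r < c mod t then c div t + 2 else c div t + 1)"
definition ch :: "nat \<Rightarrow> nat \<Rightarrow> nat \<Rightarrow> nat list" where
  "ch t c r = map (\<lambda>k. r + k * t) [0..<len t c r]"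
definition top :: "nat \<Rightarrow> nat \<Rightarrow> nat \<Rightarrow> nat" where
  "top t c r = r + (len t c r - 1) * t"
definition sig :: "nat \<Rightarrow> nat \<Rightarrow> nat \<Rightarrow> nat" where
  "sig t c r = (if r < c mod t then r + t - c mod t else r - c mod t)"

lemma top_eq: assumes "0 < t" "r < t" shows "top t c r = c + sig t c r"
proof -
  define q where "q = c div t"
  define s where "s = c mod t"
  have c: "c = q * t + s" by (simp add: q_def s_def)
  have st: "s < t" using assms by (simp add: s_def)
  show ?thesis
  proof (cases "r < s")
    case True
    then have "top t c r = r + q * t + t" by (simp add: top_def len_def q_def s_def algebra_simps)
    moreover have "sig t c r = r + t - s" using True by (simp add: sig_def s_def)
    ultimately show ?thesis using c st by simp
  next
    case False
    then have "top t c r = r + q * t" by (simp add: top_def len_def q_def s_def)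
    moreover have "sig t c r = r - s" using False by (simp add: sig_def s_def)
    ultimately show ?thesis using c False by simp
  qed
qed

lemma sig_lt: "0 < t \<Longrightarrow> r < t \<Longrightarrow> sig t c r < t"
proof -
  assume "0 < t" "r < t"
  then have "c mod t < t" by simp
  then show ?thesis using \<open>r < t\<close> unfolding sig_def by auto
qed

lemma len_pos: "len t c r \<ge> 1" by (simp add: len_def)

lemma adjd_ap: "adjd (map (\<lambda>k. r + k * t) [0..<m]) = replicate_mset (m - 1) t"
proof (induction m)
  case 0 then show ?case by simp
next
  case (Suc m)
  show ?case
  proof (cases "m = 0")
    case True then show ?thesis by simp
  next
    case False
    have "absdiff (r + (m - 1) * t) (r + m * t) = t"
    proof -
      obtain m' where "m = Suc m'" using False by (cases m) auto
      then have "m * t = (m - 1) * t + t" by simp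
      then show ?thesis by (simp add: absdiff_def)
    qed
    then show ?thesis using Suc False
      by (simp add: adjd_append last_map) (metis Suc_pred replicate_mset_Suc)
  qed
qed

lemma ch_ne: "ch t c r \<noteq> []" using len_pos[of t c r] by (auto simp: ch_def)
lemma hd_ch: "hd (ch t c r) = r" using len_pos[of t c r] by (simp add: ch_def hd_map)
lemma last_ch: "last (ch t c r) = top t c r" using len_pos[of t c r]
  by (simp add: ch_def last_map top_def)
lemma adjd_ch: "adjd (ch t c r) = replicate_mset (len t c r - 1) t"
  by (simp add: ch_def adjd_ap)
lemma distinct_ch: "0 < t \<Longrightarrow> distinct (ch t c r)"
  by (simp add: ch_def distinct_map inj_on_def)

lemma set_ch: assumes "0 < t" "r < t" shows "set (ch t c r) = {x. x < t + c \<and> x mod t = r}"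
proof
  have tp: "top t c r < t + c" using top_eq[OF assms, of c] sig_lt[OF assms, of c] by simp
  show "set (ch t c r) \<subseteq> {x. x < t + c \<and> x mod t = r}"
  proof
    fix x assume "x \<in> set (ch t c r)"
    then obtain k where k: "k < len t c r" "x = r + k * t" by (auto simp: ch_def)
    have "k \<le> len t c r - 1" using k by simp
    then have "k * t \<le> (len t c r - 1) * t" by (rule mult_le_mono1)
    then have "x \<le> top t c r" using k by (simp add: top_def)
    moreover have "x mod t = r" using k assms by simp
    ultimately show "x \<in> {x. x < t + c \<and> x mod t = r}" using tp by simp
  qed
next
  show "{x. x < t + c \<and> x mod t = r} \<subseteq> set (ch t c r)"
  proof
    fix x assume x: "x \<in> {x. x < t + c \<and> x mod t = r}"
    define k where "k = x div t"
    have xe: "x = r + k * t" using x div_mult_mod_eq[of x t] by (simp add: k_def)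
    have "k < len t c r"
    proof (rule ccontr)
      assume "\<not> k < len t c r"
      then have "len t c r * t \<le> k * t" by simp
      moreover have "len t c r * t = (len t c r - 1) * t + t"
        by (simp add: len_def)
      ultimately have "top t c r + t \<le> x" using xe by (simp add: top_def)
      then show False using x top_eq[OF assms, of c] by simp
    qed
    then show "x \<in> set (ch t c r)" using xe by (auto simp: ch_def)
  qed
qed

lemma rep_plus: "replicate_mset (m + n) x = replicate_mset m x + replicate_mset n x"
  by (induction m) auto

fun build :: "nat \<Rightarrow> nat \<Rightarrow> bool \<Rightarrow> nat list \<Rightarrow> nat list" where
  "build t c d [] = []"
| "build t c d (r # rs) = (if d then rev (ch t c r) else ch t c r) @ build t c (\<not> d) rs"

fun J :: "nat \<Rightarrow> nat \<Rightarrow> bool \<Rightarrow> nat list \<Rightarrow> nat multiset" where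
  "J t c d (x # y # zs) = add_mset (if d then absdiff x y else absdiff (top t c x) (top t c y))
      (J t c (\<not> d) (y # zs))"
| "J t c d _ = {#}"

lemma set_build: "set (build t c d rs) = (\<Union>r\<in>set rs. set (ch t c r))"
  by (induction rs arbitrary: d) auto

lemma distinct_build: "0 < t \<Longrightarrow> distinct rs \<Longrightarrow> set rs \<subseteq> {..<t} \<Longrightarrow> distinct (build t c d rs)"
proof (induction rs arbitrary: d)
  case Nil then show ?case by simp
next
  case (Cons r rs)
  have disj: "set (ch t c r) \<inter> set (build t c (\<not> d) rs) = {}"
  proof -
    have "\<And>r'. r' \<in> set rs \<Longrightarrow> set (ch t c r) \<inter> set (ch t c r') = {}"
    proof -
      fix r' assume "r' \<in> set rs"
      then have "r' \<noteq> r" "r' < t" "r < t" using Cons.prems by auto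
      then show "set (ch t c r) \<inter> set (ch t c r') = {}"
        using set_ch[OF Cons.prems(1), of r c] set_ch[OF Cons.prems(1), of r' c] by auto
    qed
    then show ?thesis by (auto simp: set_build)
  qed
  show ?case using Cons disj distinct_ch[OF Cons.prems(1), of c r] by auto
qed

lemma build_ne: "rs \<noteq> [] \<Longrightarrow> build t c d rs \<noteq> []"
  by (cases rs) (auto simp: ch_ne)

lemma hd_build: "rs \<noteq> [] \<Longrightarrow> hd (build t c d rs) = (if d then top t c (hd rs) else hd rs)"
  by (cases rs) (auto simp: ch_ne hd_ch last_ch hd_rev)

lemma adjd_build: "\<exists>X. adjd (build t c d rs) = replicate_mset X t + J t c d rs"
proof (induction rs arbitrary: d)
  case Nil then show ?case by simp
next
  case (Cons r rs)
  define A where "A = (if d then rev (ch t c r) else ch t c r)"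
  have A: "A \<noteq> []" "adjd A = replicate_mset (len t c r - 1) t"
    "last A = (if d then r else top t c r)"
    by (auto simp: A_def ch_ne adjd_rev adjd_ch last_rev hd_ch last_ch)
  show ?case
  proof (cases "rs = []")
    case True then show ?thesis using A by (auto simp: A_def)
  next
    case False
    then obtain r' rs' where rs: "rs = r' # rs'" by (cases rs) auto
    obtain X where X: "adjd (build t c (\<not> d) rs) = replicate_mset X t + J t c (\<not> d) rs"
      using Cons.IH by blast
    have "adjd (build t c d (r # rs)) = adjd (A @ build t c (\<not> d) rs)" by (simp add: A_def)
    also have "\<dots> = add_mset (absdiff (last A) (hd (build t c (\<not> d) rs))) (adjd A + adjd (build t c (\<not> d) rs))"
      using A build_ne[OF False] by (simp add: adjd_append)
    also have "\<dots> = replicate_mset (len t c r - 1 + X) t + J t c d (r # rs)"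
      using A X hd_build[OF False, of t c "\<not> d"] rs by (simp add: rep_plus)
    finally show ?thesis by blast
  qed
qed

lemma size_J: "size (J t c d xs) = length xs - 1"
  by (induction t c d xs rule: J.induct) auto

lemma J_region: "(\<And>x y. x \<in> set xs \<Longrightarrow> y \<in> set xs \<Longrightarrow> absdiff (top t c x) (top t c y) = absdiff x y)
  \<Longrightarrow> J t c d xs = adjd xs"
  by (induction t c d xs rule: J.induct) auto

lemma J_append: "P \<noteq> [] \<Longrightarrow> Q \<noteq> [] \<Longrightarrow> \<exists>e. J t c d (P @ Q) =
   add_mset (if d = even (length P - 1) then absdiff (last P) (hd Q)
             else absdiff (top t c (last P)) (top t c (hd Q))) (J t c d P + J t c e Q)"
proof (induction P arbitrary: d)
  case Nil then show ?case by simp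
next
  case (Cons x P)
  show ?case
  proof (cases "P = []")
    case True
    obtain y Q' where "Q = y # Q'" using Cons.prems by (cases Q) auto
    then show ?thesis using True by auto
  next
    case False
    obtain z P' where P: "P = z # P'" using False by (cases P) auto
    obtain e where e: "J t c (\<not> d) (P @ Q) =
       add_mset (if (\<not> d) = even (length P - 1) then absdiff (last P) (hd Q)
             else absdiff (top t c (last P)) (top t c (hd Q))) (J t c (\<not> d) P + J t c e Q)"
      using Cons.IH[OF False Cons.prems(2)] by blast
    have ev: "((\<not> d) = even (length P - 1)) = (d = even (length (x # P) - 1))"
      using P by auto
    show ?thesis using e ev P by auto
  qed
qed

lemma top_region: assumes "0 < t" "x < t" "y < t" "(x < c mod t) = (y < c mod t)"
  shows "absdiff (top t c x) (top t c y) = absdiff x y"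
proof -
  define m where "m = c mod t"
  have m: "m < t" using assms by (simp add: m_def)
  show ?thesis
  proof (cases "x < m")
    case True
    then have "y < m" using assms by (simp add: m_def)
    then have "top t c x = c + (x + t - m)" "top t c y = c + (y + t - m)"
      using True top_eq[OF assms(1,2), of c] top_eq[OF assms(1,3), of c] by (simp_all add: sig_def m_def)
    then show ?thesis using m by (simp add: absdiff_def)
  next
    case False
    then have "\<not> y < m" using assms by (simp add: m_def)
    then have "top t c x = c + (x - m)" "top t c y = c + (y - m)"
      using False top_eq[OF assms(1,2), of c] top_eq[OF assms(1,3), of c] by (simp_all add: sig_def m_def)
    then show ?thesis using False \<open>\<not> y < m\<close> by (simp add: absdiff_def)
  qed
qed

lemma Zlem: "L \<ge> 2 \<Longrightarrow> \<exists>Z. Z \<noteq> [] \<and> distinct Z \<and> set Z = {0..<L} \<and> hd Z = L - 2 \<and> last Z = L - 1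
   \<and> adjd Z = add_mset 1 (replicate_mset (L - 2) 2)"
proof (induction L rule: less_induct)
  case (less L)
  show ?case
  proof (cases "L = 2")
    case True
    then show ?thesis by (intro exI[of _ "[0,1]"]) (auto simp: absdiff_def)
  next
    case False
    show ?thesis
    proof (cases "L = 3")
      case True
      then show ?thesis by (intro exI[of _ "[1,0,2]"]) (auto simp: absdiff_def)
    next
      case False
      then have L4: "L \<ge> 4" using \<open>L \<noteq> 2\<close> less.prems by simp
      have ex: "\<exists>Z. Z \<noteq> [] \<and> distinct Z \<and> set Z = {0..<L-2} \<and> hd Z = L - 2 - 2 \<and> last Z = L - 2 - 1
        \<and> adjd Z = add_mset 1 (replicate_mset (L - 2 - 2) 2)"
        by (rule less.IH) (use L4 in auto)
      have e: "L - 2 - 2 = L - 4" "L - 2 - 1 = L - 3" by simp_all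
      obtain Z where Z: "Z \<noteq> []" "distinct Z" "set Z = {0..<L-2}" "hd Z = L - 4" "last Z = L - 3"
        "adjd Z = add_mset 1 (replicate_mset (L - 4) 2)"
        using ex unfolding e by blast
      define Z' where "Z' = (L - 2) # Z @ [L - 1]"
      have "set Z' = {0..<L}" using Z L4 by (auto simp: Z'_def)
      moreover have "distinct Z'" using Z by (auto simp: Z'_def)
      moreover have "adjd Z' = add_mset 2 (add_mset 2 (adjd Z))"
      proof -
        have f: "L - 4 \<le> L - 2" "L - 2 - (L - 4) = 2" "L - 3 \<le> L - 1" "L - 1 - (L - 3) = 2"
          using L4 by arith+
        have "absdiff (L - 2) (L - 4) = 2" "absdiff (L - 3) (L - 1) = 2"
          unfolding absdiff_def using f by (simp_all add: absdiff_sym)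
        then show ?thesis using Z by (simp add: Z'_def adjd_Cons adjd_append)
      qed
      moreover have "replicate_mset (L - 2) (2::nat) = add_mset 2 (add_mset 2 (replicate_mset (L - 4) 2))"
      proof -
        have "L - 2 = Suc (Suc (L - 4))" using L4 by simp
        then show ?thesis by simp
      qed
      ultimately show ?thesis using Z by (intro exI[of _ Z']) (auto simp: Z'_def)
    qed
  qed
qed

lemma seg_top: "L \<ge> 1 \<Longrightarrow> k \<le> L - 2 \<Longrightarrow> \<exists>P. P \<noteq> [] \<and> distinct P \<and> set P = {0..<L} \<and> last P = L - 1
   \<and> adjd P = replicate_mset (L - 1 - k) 1 + replicate_mset k 2"
proof (induction L rule: less_induct)
  case (less L)
  show ?case
  proof (cases "L = 1")
    case True then show ?thesis using less.prems by (intro exI[of _ "[0]"]) auto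
  next
    case False
    show ?thesis
    proof (cases "k = L - 2")
      case True
      obtain Z where Z: "Z \<noteq> []" "distinct Z" "set Z = {0..<L}" "last Z = L - 1"
        "adjd Z = add_mset 1 (replicate_mset (L - 2) 2)" using Zlem[of L] False less.prems by auto
      have "L - 1 - k = 1" using True False less.prems by simp
      then show ?thesis using Z True by (intro exI[of _ Z]) auto
    next
      case kne: False
      then have L3: "L \<ge> 3" "k \<le> (L - 1) - 2" using False less.prems by auto
      have ex: "\<exists>P. P \<noteq> [] \<and> distinct P \<and> set P = {0..<L-1} \<and> last P = L - 1 - 1
        \<and> adjd P = replicate_mset (L - 1 - 1 - k) 1 + replicate_mset k 2"
        by (rule less.IH) (use L3 in auto)
      have e: "L - 1 - 1 = L - 2" by simp
      obtain P where P: "P \<noteq> []" "distinct P" "set P = {0..<L-1}" "last P = L - 2"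
        "adjd P = replicate_mset (L - 1 - 1 - k) 1 + replicate_mset k 2"
        using ex unfolding e by blast
      define P' where "P' = P @ [L - 1]"
      have "set P' = {0..<L}" using P L3 by (auto simp: P'_def)
      moreover have "distinct P'" using P by (auto simp: P'_def)
      moreover have "adjd P' = add_mset 1 (adjd P)"
        using P L3 by (simp add: P'_def adjd_append absdiff_def)
      moreover have "L - 1 - k = Suc (L - 1 - 1 - k)" using L3 by simp
      ultimately show ?thesis using P by (intro exI[of _ P']) (auto simp: P'_def)
    qed
  qed
qed

lemma mirror: assumes "Z \<noteq> []" "distinct Z" "set Z = {0..<L}"
  shows "rev (map (\<lambda>x. L - 1 - x) Z) \<noteq> [] \<and> distinct (rev (map (\<lambda>x. L - 1 - x) Z))
   \<and> set (rev (map (\<lambda>x. L - 1 - x) Z)) = {0..<L}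
   \<and> hd (rev (map (\<lambda>x. L - 1 - x) Z)) = L - 1 - last Z
   \<and> last (rev (map (\<lambda>x. L - 1 - x) Z)) = L - 1 - hd Z
   \<and> adjd (rev (map (\<lambda>x. L - 1 - x) Z)) = adjd Z"
proof -
  have inj: "inj_on (\<lambda>x. L - 1 - x) (set Z)" using assms by (auto simp: inj_on_def)
  have im: "(\<lambda>x. L - 1 - x) ` {0..<L} = {0..<L}"
  proof
    show "(\<lambda>x. L - 1 - x) ` {0..<L} \<subseteq> {0..<L}" by auto
    show "{0..<L} \<subseteq> (\<lambda>x. L - 1 - x) ` {0..<L}"
    proof
      fix y assume "y \<in> {0..<L}"
      then have "y = L - 1 - (L - 1 - y)" "L - 1 - y \<in> {0..<L}" by auto
      then show "y \<in> (\<lambda>x. L - 1 - x) ` {0..<L}" by blast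
    qed
  qed
  have ad: "adjd (map (\<lambda>x. L - 1 - x) Z) = adjd Z"
    by (rule adjd_map) (use assms in \<open>auto simp: absdiff_def\<close>)
  show ?thesis using assms inj im ad
    by (simp add: distinct_map hd_rev last_rev hd_map last_map adjd_rev)
qed

lemma shift: assumes "distinct Z" "set Z = {0..<L}"
  shows "distinct (map (\<lambda>x. x + s) Z) \<and> set (map (\<lambda>x. x + s) Z) = {s..<s+L}
    \<and> adjd (map (\<lambda>x. x + s) Z) = adjd Z"
proof -
  have im: "(\<lambda>x. x + s) ` {0..<L} = {s..<s+L}"
  proof
    show "(\<lambda>x. x + s) ` {0..<L} \<subseteq> {s..<s+L}" by auto
    show "{s..<s+L} \<subseteq> (\<lambda>x. x + s) ` {0..<L}"
    proof
      fix y assume "y \<in> {s..<s+L}"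
      then have "y = (y - s) + s" "y - s \<in> {0..<L}" by auto
      then show "y \<in> (\<lambda>x. x + s) ` {0..<L}" by blast
    qed
  qed
  have ad: "adjd (map (\<lambda>x. x + s) Z) = adjd Z"
    by (rule adjd_map) (auto simp: absdiff_def)
  show ?thesis using assms im ad by (simp add: distinct_map)
qed

lemma seg_bot: assumes "L \<ge> 1" "k \<le> L - 2"
  shows "\<exists>Q. Q \<noteq> [] \<and> distinct Q \<and> set Q = {0..<L} \<and> hd Q = 0
   \<and> adjd Q = replicate_mset (L - 1 - k) 1 + replicate_mset k 2"
proof -
  obtain P where P: "P \<noteq> []" "distinct P" "set P = {0..<L}" "last P = L - 1"
    "adjd P = replicate_mset (L - 1 - k) 1 + replicate_mset k 2" using seg_top[OF assms] by blast
  show ?thesis using mirror[OF P(1-3)] P by (intro exI[of _ "rev (map (\<lambda>x. L - 1 - x) P)"]) simp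
qed

lemma residue: assumes "s < t" "a + b = t - 1" "2 \<le> a"
  shows "\<exists>P Q. distinct P \<and> distinct Q \<and> set P = {0..<s} \<and> set Q = {s..<t} \<and> Q \<noteq> []
    \<and> (P \<noteq> [] \<longrightarrow> add_mset (absdiff (last P) (hd Q)) (adjd P + adjd Q)
          = replicate_mset a 1 + replicate_mset b 2)
    \<and> (P = [] \<longrightarrow> adjd Q = replicate_mset a 1 + replicate_mset b 2)"
proof (cases "s = 0")
  case True
  obtain Q where Q: "Q \<noteq> []" "distinct Q" "set Q = {0..<t}"
    "adjd Q = replicate_mset (t - 1 - b) 1 + replicate_mset b 2"
  proof -
    have "b \<le> t - 2" "1 \<le> t" using assms by auto
    then show ?thesis using seg_top[of t b] that by blast
  qed
  have "t - 1 - b = a" using assms by simp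
  then show ?thesis using Q True by (intro exI[of _ "[]"] exI[of _ Q]) simp
next
  case s0: False
  show ?thesis
  proof (cases "b \<le> (s - 2) + (t - s - 2)")
    case True
    define k1 where "k1 = min b (s - 2)"
    define k2 where "k2 = b - k1"
    have k: "k1 \<le> s - 2" "k2 \<le> t - s - 2" "k1 + k2 = b" using True by (auto simp: k1_def k2_def)
    obtain P where P: "P \<noteq> []" "distinct P" "set P = {0..<s}" "last P = s - 1"
      "adjd P = replicate_mset (s - 1 - k1) 1 + replicate_mset k1 2"
      using seg_top[of s k1] s0 k by auto
    obtain Q0 where Q0: "Q0 \<noteq> []" "distinct Q0" "set Q0 = {0..<t - s}" "hd Q0 = 0"
      "adjd Q0 = replicate_mset (t - s - 1 - k2) 1 + replicate_mset k2 2"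
    proof -
      have "1 \<le> t - s" "k2 \<le> t - s - 2" using assms k by auto
      then show ?thesis using seg_bot[of "t - s" k2] that by blast
    qed
    define Q where "Q = map (\<lambda>x. x + s) Q0"
    have Q: "Q \<noteq> []" "distinct Q" "set Q = {s..<t}" "hd Q = s" "adjd Q = adjd Q0"
      using shift[OF Q0(2,3), of s] Q0 assms by (auto simp: Q_def hd_map)
    have j: "absdiff (last P) (hd Q) = 1" using P Q s0 by (simp add: absdiff_def)
    have ar: "1 + (s - 1 - k1) + (t - s - 1 - k2) = a" "k1 + k2 = b" using k assms s0 by auto
    have "add_mset (absdiff (last P) (hd Q)) (adjd P + adjd Q) = replicate_mset a 1 + replicate_mset b 2"
      unfolding j Q(5) P(5) Q0(5) multiset_eq_iff using ar by auto
    then show ?thesis using P Q by blast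
  next
    case False
    then have st: "2 \<le> s" "s + 2 \<le> t" "b = t - 3" "a = 2" using assms s0 by auto
    obtain Z1 where Z1: "Z1 \<noteq> []" "distinct Z1" "set Z1 = {0..<s}" "hd Z1 = s - 2" "last Z1 = s - 1"
      "adjd Z1 = add_mset 1 (replicate_mset (s - 2) 2)" using Zlem[of s] st by auto
    obtain Z2 where Z2: "Z2 \<noteq> []" "distinct Z2" "set Z2 = {0..<t - s}" "hd Z2 = t - s - 2" "last Z2 = t - s - 1"
      "adjd Z2 = add_mset 1 (replicate_mset (t - s - 2) 2)"
    proof -
      have "2 \<le> t - s" "t - s - 2 = t - s - 2" "t - s - 1 = t - s - 1" using st by auto
      then show ?thesis using Zlem[of "t - s"] that by blast
    qed
    define M where "M = rev (map (\<lambda>x. t - s - 1 - x) Z2)"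
    have M: "M \<noteq> []" "distinct M" "set M = {0..<t - s}" "hd M = 0" "adjd M = adjd Z2"
      using mirror[OF Z2(1-3)] Z2 by (simp_all add: M_def)
    define Q where "Q = map (\<lambda>x. x + s) M"
    have Q: "Q \<noteq> []" "distinct Q" "set Q = {s..<t}" "hd Q = s" "adjd Q = adjd Z2"
      using shift[OF M(2,3), of s] M assms by (auto simp: Q_def hd_map)
    define P where "P = rev Z1"
    have P: "P \<noteq> []" "distinct P" "set P = {0..<s}" "last P = s - 2" "adjd P = adjd Z1"
      using Z1 by (simp_all add: P_def last_rev adjd_rev)
    have j: "absdiff (last P) (hd Q) = 2" using P Q st by (simp add: absdiff_def)
    have ar: "1 + (s - 2) + (t - s - 2) = b" using st by auto
    have "add_mset (absdiff (last P) (hd Q)) (adjd P + adjd Q) = replicate_mset a 1 + replicate_mset b 2"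
      unfolding j Q(5) P(5) Z1(6) Z2(6) multiset_eq_iff using ar st by auto
    then show ?thesis using P Q by blast
  qed
qed

theorem proposition4p1:
  fixes t a b c :: nat
  assumes "t \<ge> 4" and "even t"
    and "a \<ge> 2" and "b > 0" and "c > 0"
    and "a + b = t - 1"
  shows "admits_linear_realization
           (replicate_mset a 1 + replicate_mset b 2 + replicate_mset c t)"
proof -
  have t0: "0 < t" using assms by simp
  define s where "s = c mod t"
  have st: "s < t" using t0 by (simp add: s_def)
  have st': "c mod t < t" using t0 by simp
  obtain P Q where PQ: "distinct P" "distinct Q" "set P = {0..<s}" "set Q = {s..<t}" "Q \<noteq> []"
    "P \<noteq> [] \<longrightarrow> add_mset (absdiff (last P) (hd Q)) (adjd P + adjd Q)
          = replicate_mset a 1 + replicate_mset b 2"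
    "P = [] \<longrightarrow> adjd Q = replicate_mset a 1 + replicate_mset b 2"
    using residue[OF st assms(6) assms(3)] by blast
  define rs where "rs = P @ Q"
  have rsd: "distinct rs" using PQ by (auto simp: rs_def)
  have rss: "set rs = {0..<t}" using PQ st by (auto simp: rs_def)
  have regP: "\<And>x y. x \<in> set P \<Longrightarrow> y \<in> set P \<Longrightarrow> absdiff (top t c x) (top t c y) = absdiff x y"
    using PQ st t0 by (intro top_region) (auto simp: s_def[symmetric])
  have regQ: "\<And>x y. x \<in> set Q \<Longrightarrow> y \<in> set Q \<Longrightarrow> absdiff (top t c x) (top t c y) = absdiff x y"
    using PQ st t0 by (intro top_region) (auto simp: s_def[symmetric])
  obtain d where Jd: "J t c d rs = replicate_mset a 1 + replicate_mset b 2"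
  proof (cases "P = []")
    case True
    then have "J t c True rs = adjd Q" using J_region[OF regQ] by (simp add: rs_def)
    then have "J t c True rs = replicate_mset a 1 + replicate_mset b 2" using PQ True by simp
    then show ?thesis using that by blast
  next
    case False
    define d where "d = even (length P - 1)"
    obtain e where e: "J t c d (P @ Q) =
       add_mset (if d = even (length P - 1) then absdiff (last P) (hd Q)
             else absdiff (top t c (last P)) (top t c (hd Q))) (J t c d P + J t c e Q)"
      using J_append[OF False PQ(5)] by blast
    have "J t c d rs = add_mset (absdiff (last P) (hd Q)) (adjd P + adjd Q)"
      using e J_region[OF regP] J_region[OF regQ] by (simp add: rs_def d_def)
    then show ?thesis using that PQ False by auto
  qed
  define xs where "xs = build t c d rs"
  have "set rs \<subseteq> {..<t}" using rss by auto
  then have xsd: "distinct xs" using distinct_build[OF t0 rsd] by (simp add: xs_def)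
  have xss: "set xs = {0..<t + c}"
  proof -
    have "set xs = (\<Union>r\<in>{0..<t}. {x. x < t + c \<and> x mod t = r})"
      using set_ch[OF t0] by (simp add: xs_def set_build rss)
    also have "\<dots> = {0..<t + c}" using t0 by auto
    finally show ?thesis .
  qed
  have xsl: "length xs = t + c" using distinct_card[OF xsd] xss by simp
  obtain X where X: "adjd xs = replicate_mset X t + J t c d rs"
    using adjd_build[of t c d rs] unfolding xs_def by blast
  have "size (adjd xs) = t + c - 1" using xsl size_adjd by simp
  moreover have "size (J t c d rs) = t - 1" using size_J[of t c d rs] rss rsd distinct_card[OF rsd] by simp
  ultimately have "X = c" using X t0 by simp
  then have ad: "adjd xs = replicate_mset a 1 + replicate_mset b 2 + replicate_mset c t"
    using X Jd by (simp add: ac_simps)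
  show ?thesis
    unfolding admits_linear_realization_def linear_realization_def
  proof (intro exI[of _ xs] conjI)
    show "length xs = size (replicate_mset a 1 + replicate_mset b 2 + replicate_mset c t) + 1"
      using xsl assms by simp
    show "distinct xs" by (rule xsd)
    show "set xs = {0..<length xs}" using xss xsl by simp
    show "mset (map (\<lambda>i. absdiff (xs ! i) (xs ! Suc i)) [0..<length xs - 1]) =
      replicate_mset a 1 + replicate_mset b 2 + replicate_mset c t"
      using ad adjd_mset[of xs] by simp
  qed
qed

end
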